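(* Let $M$ be either the interval $[0,1]$ or the unit circle $S^1$, and let $f:M\to M$ be continuous. Then every wandering interval $J$ of $f$ satisfies $\mu(J)=0$ for every Borel probability measure $\mu$ that is an expansive measure of $f$.
   Context: $M$ carries its usual metric $d$. A wandering interval of $f$ is an interval $J\subset M$ such that $f^n(J)\cap f^m(J)=\emptyset$ for all distinct $n,m\in\{0,1,2,\dots\}$ and no point of $J$ belongs to the stable set $W^s(p)=\{x:\lim_{n\to\infty}d(f^n(x),f^n(p))=0\}$ of a periodic point $p$. A Borel probability measure $\mu$ is an expansive measure of $f$ if there is $\delta>0$ with $\mu(\Phi_\delta(x))=0$ for all $x\in M$, where $\Phi_\delta(x)=\{y\in M: d(f^i(y),f^i(x))\le\delta \ \forall i\in\{0,1,2,\dots\}\}$. *)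

theory Defs
  imports "HOL-Probability.Probability"
begin

definition periodic_point :: "'a set \<Rightarrow> ('a \<Rightarrow> 'a) \<Rightarrow> 'a \<Rightarrow> bool" where
  "periodic_point M f p \<longleftrightarrow> p \<in> M \<and> (\<exists>n>0. (f ^^ n) p = p)"

definition stable_set :: "'a set \<Rightarrow> ('a \<Rightarrow> 'a::metric_space) \<Rightarrow> 'a \<Rightarrow> 'a set" where
  "stable_set M f p = {x \<in> M. (\<lambda>n. dist ((f ^^ n) x) ((f ^^ n) p)) \<longlonglongrightarrow> 0}"

text \<open>An interval of M: a connected subset of M with more than one point
  (for M = [0,1] these are the nondegenerate intervals, for M = S^1 the nondegenerate arcs).\<close>
definition is_interval_in :: "'a set \<Rightarrow> 'a::topological_space set \<Rightarrow> bool" where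
  "is_interval_in M J \<longleftrightarrow> J \<subseteq> M \<and> connected J \<and> (\<exists>x\<in>J. \<exists>y\<in>J. x \<noteq> y)"

definition wandering_interval :: "'a set \<Rightarrow> ('a \<Rightarrow> 'a::metric_space) \<Rightarrow> 'a set \<Rightarrow> bool" where
  "wandering_interval M f J \<longleftrightarrow>
     is_interval_in M J \<and>
     (\<forall>n m::nat. n \<noteq> m \<longrightarrow> (f ^^ n) ` J \<inter> (f ^^ m) ` J = {}) \<and>
     (\<forall>p. periodic_point M f p \<longrightarrow> J \<inter> stable_set M f p = {})"

definition dyn_ball :: "'a set \<Rightarrow> ('a \<Rightarrow> 'a::metric_space) \<Rightarrow> real \<Rightarrow> 'a \<Rightarrow> 'a set" where
  "dyn_ball M f \<delta> x = {y \<in> M. \<forall>i::nat. dist ((f ^^ i) y) ((f ^^ i) x) \<le> \<delta>}"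

definition borel_prob_on :: "'a::topological_space set \<Rightarrow> 'a measure \<Rightarrow> bool" where
  "borel_prob_on M \<mu> \<longleftrightarrow> prob_space \<mu> \<and> sets \<mu> = sets (restrict_space borel M)"

definition expansive_measure :: "'a set \<Rightarrow> ('a \<Rightarrow> 'a::metric_space) \<Rightarrow> 'a measure \<Rightarrow> bool" where
  "expansive_measure M f \<mu> \<longleftrightarrow> (\<exists>\<delta>>0. \<forall>x\<in>M. emeasure \<mu> (dyn_ball M f \<delta> x) = 0)"

end

theory Submission
  imports Defs
begin


lemma funpow_cont:
  assumes fc: "continuous_on M f" and fM: "f ` M \<subseteq> M"
  shows "continuous_on M (f^^i) \<and> (f^^i) ` M \<subseteq> M"
proof (induction i)
  case 0 then show ?case by (simp add: continuous_on_id)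
next
  case (Suc i)
  then show ?case using fc fM
    by (auto simp: continuous_on_compose2[of M f M "f^^i"] intro: continuous_on_compose2[of M f M "f^^i"])
qed

lemma null_of_shrinking:
  fixes f :: "'a::metric_space \<Rightarrow> 'a"
  assumes M: "compact M" and fc: "continuous_on M f" and fM: "f ` M \<subseteq> M" and JM: "J \<subseteq> M"
    and sets: "sets \<mu> = sets (restrict_space borel M)"
    and ex: "expansive_measure M f \<mu>"
    and shr: "\<And>\<delta>. \<delta>>0 \<Longrightarrow> \<exists>N. \<forall>n\<ge>N. \<forall>y\<in>J. \<forall>z\<in>J. dist ((f^^n) y) ((f^^n) z) \<le> \<delta>"
  shows "emeasure \<mu> J = 0"
proof -
  obtain \<delta> where d0: "\<delta>>0" and null: "\<forall>x\<in>M. emeasure \<mu> (dyn_ball M f \<delta> x) = 0"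
    using ex unfolding expansive_measure_def by blast
  obtain N where N: "\<forall>n\<ge>N. \<forall>y\<in>J. \<forall>z\<in>J. dist ((f^^n) y) ((f^^n) z) \<le> \<delta>"
    using shr d0 by blast
  have uc: "\<exists>\<epsilon>>0. \<forall>i<n. \<forall>y\<in>M. \<forall>z\<in>M. dist y z < \<epsilon> \<longrightarrow> dist ((f^^i) y) ((f^^i) z) \<le> \<delta>" for n
  proof (induction n)
    case 0 then show ?case by (rule exI[of _ 1]) auto
  next
    case (Suc n)
    then obtain e where e: "e>0" "\<forall>i<n. \<forall>y\<in>M. \<forall>z\<in>M. dist y z < e \<longrightarrow> dist ((f^^i) y) ((f^^i) z) \<le> \<delta>" by blast
    have "uniformly_continuous_on M (f^^n)"
      using compact_uniformly_continuous M funpow_cont[OF fc fM] by blast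
    then obtain d where d: "d>0" "\<forall>x\<in>M. \<forall>x'\<in>M. dist x' x < d \<longrightarrow> dist ((f^^n) x') ((f^^n) x) < \<delta>"
      unfolding uniformly_continuous_on_def using d0 by blast
    show ?case
    proof (rule exI[of _ "min e d"], intro conjI allI impI ballI)
      show "min e d > 0" using e d by simp
      fix i y z assume "i < Suc n" "y \<in> M" "z \<in> M" "dist y z < min e d"
      then show "dist ((f^^i) y) ((f^^i) z) \<le> \<delta>"
        using e d by (cases "i = n") (auto simp: less_Suc_eq intro!: less_imp_le)
    qed
  qed
  obtain \<epsilon> where ep: "\<epsilon>>0" "\<forall>i<N. \<forall>y\<in>M. \<forall>z\<in>M. dist y z < \<epsilon> \<longrightarrow> dist ((f^^i) y) ((f^^i) z) \<le> \<delta>"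
    using uc by blast
  have cJ: "compact (closure J)"
    using M JM by (metis closed_closure closure_minimal compact_imp_closed compact_Int_closed inf.absorb2)
  have "closure J \<subseteq> (\<Union>x\<in>J. ball x \<epsilon>)"
  proof
    fix z assume "z \<in> closure J"
    then obtain x where "x \<in> J" "dist x z < \<epsilon>" using closure_approachable ep(1) by blast
    then show "z \<in> (\<Union>x\<in>J. ball x \<epsilon>)" by auto
  qed
  then obtain K where K: "K \<subseteq> J" "finite K" "closure J \<subseteq> (\<Union>x\<in>K. ball x \<epsilon>)"
    using compactE_image[OF cJ, of J "\<lambda>x. ball x \<epsilon>"] by blast
  have sub: "J \<subseteq> (\<Union>x\<in>K. dyn_ball M f \<delta> x)"
  proof
    fix y assume y: "y \<in> J"
    then obtain x where x: "x \<in> K" "y \<in> ball x \<epsilon>" using K closure_subset by blast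
    have "dist ((f^^i) y) ((f^^i) x) \<le> \<delta>" for i
    proof (cases "i < N")
      case True
      have "x \<in> M" "y \<in> M" "dist x y < \<epsilon>" using x y K JM by auto
      then show ?thesis using ep(2) True by (metis dist_commute)
    next
      case False then show ?thesis using N x y K by auto
    qed
    then show "y \<in> (\<Union>x\<in>K. dyn_ball M f \<delta> x)" using x y JM unfolding dyn_ball_def by auto
  qed
  have meas: "dyn_ball M f \<delta> x \<in> sets \<mu>" for x
  proof -
    have eq: "dyn_ball M f \<delta> x = (\<Inter>i. M \<inter> (f^^i) -` cball ((f^^i) x) \<delta>)"
      unfolding dyn_ball_def by (auto simp: dist_commute)
    have "closed (dyn_ball M f \<delta> x)"
      unfolding eq
      by (intro closed_INT ballI continuous_closed_preimage funpow_cont[OF fc fM, THEN conjunct1]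
          compact_imp_closed M closed_cball)
    then have "M \<inter> dyn_ball M f \<delta> x \<in> sets (restrict_space borel M)"
      by (auto simp: sets_restrict_space)
    moreover have "M \<inter> dyn_ball M f \<delta> x = dyn_ball M f \<delta> x" unfolding dyn_ball_def by auto
    ultimately show ?thesis using sets by simp
  qed
  have "emeasure \<mu> J \<le> emeasure \<mu> (\<Union>x\<in>K. dyn_ball M f \<delta> x)"
    by (rule emeasure_mono[OF sub]) (use meas K in auto)
  also have "\<dots> \<le> (\<Sum>x\<in>K. emeasure \<mu> (dyn_ball M f \<delta> x))"
    by (rule emeasure_subadditive_finite) (use meas K in auto)
  also have "\<dots> = 0" using null K JM by (auto intro: sum.neutral)
  finally show ?thesis by simp
qed



lemma exp_i_sub_one_le: "norm (exp (\<i> * of_real t) - 1) \<le> \<bar>t\<bar>"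
proof -
  have c: "cos t = 1 - 2 * (sin (t/2))^2"
    using cos_double_sin[of "t/2"] by simp
  have "(norm (exp (\<i> * of_real t) - 1))^2 = (cos t - 1)^2 + (sin t)^2"
    by (simp add: exp_Euler cmod_power2 cos_of_real sin_of_real)
  also have "\<dots> = 2 - 2 * cos t" using sin_cos_squared_add[of t] by (simp add: power2_eq_square algebra_simps)
  also have "\<dots> = (2 * sin (t/2))^2" using c by (simp add: power2_eq_square)
  also have "\<dots> \<le> t^2"
  proof -
    have "\<bar>2 * sin (t/2)\<bar> \<le> \<bar>t\<bar>" using abs_sin_x_le_abs_x[of "t/2"] by simp
    then show ?thesis by (metis abs_ge_zero power2_abs power_mono)
  qed
  finally show ?thesis by (metis abs_ge_zero norm_ge_zero power2_le_imp_le power2_abs)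
qed

lemma exp_i_lip: "dist (exp (\<i> * of_real a)) (exp (\<i> * of_real b)) \<le> \<bar>a - b\<bar>"
proof -
  have "exp (\<i> * of_real a) - exp (\<i> * of_real b) = exp (\<i> * of_real b) * (exp (\<i> * of_real (a - b)) - 1)"
    by (simp add: algebra_simps flip: exp_add)
  then have "dist (exp (\<i> * of_real a)) (exp (\<i> * of_real b)) = norm (exp (\<i> * of_real (a - b)) - 1)"
    by (simp add: dist_norm norm_mult)
  then show ?thesis using exp_i_sub_one_le[of "a - b"] by linarith
qed

lemma arc_param:
  fixes p :: complex assumes p: "norm p = 1"
  shows "continuous_on (sphere 0 1 - {p}) (\<lambda>z. Arg (- z / p))"
    and "\<And>z. z \<in> sphere 0 1 \<Longrightarrow> z = - p * exp (\<i> * of_real (Arg (- z / p)))"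
    and "\<And>z. z \<in> sphere 0 1 - {p} \<Longrightarrow> -pi < Arg (- z / p) \<and> Arg (- z / p) < pi"
proof -
  have p0: "p \<noteq> 0" using p by auto
  have key: "- z / p \<in> \<real> \<and> Re (- z / p) < 0 \<Longrightarrow> z = p" if "z \<in> sphere 0 1" for z
  proof -
    assume a: "- z / p \<in> \<real> \<and> Re (- z / p) < 0"
    have n: "norm (- z / p) = 1" using that p by (simp add: norm_divide)
    from a obtain r where r: "- z / p = of_real r" "r < 0" by (auto elim!: Reals_cases)
    then have "\<bar>r\<bar> = 1" using n by simp
    then have "- z / p = -1" using r by simp
    then show "z = p" using p0 by (simp add: field_simps)
  qed
  show "continuous_on (sphere 0 1 - {p}) (\<lambda>z. Arg (- z / p))"
  proof (rule continuous_at_imp_continuous_on, rule ballI)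
    fix z assume z: "z \<in> sphere 0 1 - {p}"
    have "- z / p \<notin> \<real>\<^sub>\<le>\<^sub>0"
    proof
      assume "- z / p \<in> \<real>\<^sub>\<le>\<^sub>0"
      moreover have "- z / p \<noteq> 0" using z p0 by auto
      ultimately obtain r where r: "- z / p = of_real r" "r < 0"
        by (metis nonpos_Reals_cases of_real_0 order_le_less)
      then have "- z / p \<in> \<real> \<and> Re (- z / p) < 0" by simp
      then show False using key z by auto
    qed
    then have "continuous (at (- z / p)) Arg" by (rule continuous_at_Arg)
    then show "continuous (at z) (\<lambda>z. Arg (- z / p))"
    proof -
      have "continuous (at z) (\<lambda>z. - z / p)" using p0 by (intro continuous_intros)
      from continuous_at_compose[OF this \<open>continuous (at (- z / p)) Arg\<close>]
      show ?thesis by (simp add: o_def)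
    qed
  qed
  show "z = - p * exp (\<i> * of_real (Arg (- z / p)))" if "z \<in> sphere 0 1" for z
  proof -
    have n: "norm (- z / p) = 1" using that p by (simp add: norm_divide)
    then have "- z / p \<noteq> 0" by auto
    from Arg_eq[OF this] n have "- z / p = exp (\<i> * of_real (Arg (- z / p)))" by simp
    moreover have "z = - p * (- z / p)" using p0 by simp
    ultimately show ?thesis by metis
  qed
  show "-pi < Arg (- z / p) \<and> Arg (- z / p) < pi" if "z \<in> sphere 0 1 - {p}" for z
    using mpi_less_Arg[of "- z / p"] Arg_le_pi[of "- z / p"] Arg_eq_pi_iff[of "- z / p"] key that
    by (auto simp: order_le_less)
qed


lemma shrink_from_grid:
  fixes f :: "'a::metric_space \<Rightarrow> 'a"
  assumes fc: "continuous_on M f" and fM: "f ` M \<subseteq> M" and JM: "J \<subseteq> M" and cJ: "connected J"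
    and wd: "\<forall>n m::nat. n \<noteq> m \<longrightarrow> (f^^n) ` J \<inter> (f^^m) ` J = {}"
    and grid: "\<And>\<delta>. \<delta>>0 \<Longrightarrow> \<exists>G. finite G \<and> (\<forall>C. C \<subseteq> M \<longrightarrow> connected C \<longrightarrow> (\<exists>y\<in>C. \<exists>z\<in>C. \<delta> < dist y z) \<longrightarrow> C \<inter> G \<noteq> {})"
    and d: "\<delta>>0"
  shows "\<exists>N. \<forall>n\<ge>N. \<forall>y\<in>J. \<forall>z\<in>J. dist ((f^^n) y) ((f^^n) z) \<le> \<delta>"
proof -
  obtain G where G: "finite G" "\<forall>C. C \<subseteq> M \<longrightarrow> connected C \<longrightarrow> (\<exists>y\<in>C. \<exists>z\<in>C. \<delta> < dist y z) \<longrightarrow> C \<inter> G \<noteq> {}"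
    using grid[OF d] by blast
  define B where "B = {n. \<exists>y\<in>J. \<exists>z\<in>J. \<delta> < dist ((f^^n) y) ((f^^n) z)}"
  have "\<forall>n\<in>B. \<exists>g. g \<in> (f^^n) ` J \<inter> G"
  proof
    fix n assume n: "n \<in> B"
    have "(f^^n) ` J \<subseteq> M" using funpow_cont[OF fc fM, of n] JM by blast
    moreover have "connected ((f^^n) ` J)"
      using connected_continuous_image[OF continuous_on_subset[OF funpow_cont[OF fc fM, of n, THEN conjunct1] JM] cJ] .
    moreover have "\<exists>y\<in>(f^^n) ` J. \<exists>z\<in>(f^^n) ` J. \<delta> < dist y z" using n unfolding B_def by blast
    ultimately show "\<exists>g. g \<in> (f^^n) ` J \<inter> G" using G(2) by blast
  qed
  then obtain g where g: "\<forall>n\<in>B. g n \<in> (f^^n) ` J \<inter> G" by metis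
  have "inj_on g B"
  proof
    fix n m
    assume nm: "n \<in> B" "m \<in> B" "g n = g m"
    have 1: "g n \<in> (f^^n) ` J" using g nm(1) by blast
    have "g m \<in> (f^^m) ` J" using g nm(2) by blast
    then have 2: "g n \<in> (f^^m) ` J" using nm(3) by simp
    show "n = m" using wd 1 2 by blast
  qed
  then have "finite B" using inj_on_finite[of g B G] g G(1) by blast
  then obtain N where N: "\<forall>n\<in>B. n < N" using finite_nat_set_iff_bounded by blast
  show ?thesis
  proof (rule exI[of _ N], intro allI impI ballI)
    fix n y z assume "N \<le> n" "y \<in> J" "z \<in> J"
    then have "n \<notin> B" using N by fastforce
    then show "dist ((f^^n) y) ((f^^n) z) \<le> \<delta>" using \<open>y \<in> J\<close> \<open>z \<in> J\<close> unfolding B_def by (auto simp: not_less)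
  qed
qed



lemma grid_real:
  assumes d: "(\<delta>::real) > 0"
  shows "\<exists>G. finite G \<and> (\<forall>C. C \<subseteq> {0..1::real} \<longrightarrow> connected C \<longrightarrow> (\<exists>y\<in>C. \<exists>z\<in>C. \<delta> < dist y z) \<longrightarrow> C \<inter> G \<noteq> {})"
proof (rule exI[of _ "(\<lambda>k. real k * \<delta>/2) ` {..nat \<lceil>2/\<delta>\<rceil>}"], intro conjI allI impI)
  fix C :: "real set" assume C: "C \<subseteq> {0..1}" "connected C" "\<exists>y\<in>C. \<exists>z\<in>C. \<delta> < dist y z"
  then obtain y z where yz: "y \<in> C" "z \<in> C" "\<delta> < dist y z" by blast
  define a where "a = min y z"
  define b where "b = max y z"
  have dyz: "\<delta> < \<bar>y - z\<bar>" using yz(3) by (simp add: dist_real_def)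
  have ab: "a \<in> C" "b \<in> C" "a + \<delta> < b"
  proof -
    show "a \<in> C" "b \<in> C" unfolding a_def b_def using yz by (simp_all add: min_def max_def)
    show "a + \<delta> < b"
    proof (cases "y \<le> z")
      case True
      then have "\<bar>y - z\<bar> = z - y" by simp
      then show ?thesis using True dyz unfolding a_def b_def by simp
    next
      case False
      then have "\<bar>y - z\<bar> = y - z" by simp
      then show ?thesis using False dyz unfolding a_def b_def by simp
    qed
  qed
  have a0: "0 \<le> a" "a \<le> 1" using ab C by auto
  define k where "k = nat \<lceil>2*a/\<delta>\<rceil>"
  have rk: "real k = of_int \<lceil>2*a/\<delta>\<rceil>" unfolding k_def using a0 d by simp
  have k1: "2*a/\<delta> \<le> real k" "real k < 2*a/\<delta> + 1" using rk by linarith+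
  have g1: "a \<le> real k * \<delta>/2" using k1(1) d by (simp add: field_simps)
  have g2: "real k * \<delta>/2 < a + \<delta>/2" using k1(2) d by (simp add: field_simps)
  have iv: "\<forall>a\<in>C. \<forall>b\<in>C. \<forall>x. a \<le> x \<longrightarrow> x \<le> b \<longrightarrow> x \<in> C"
    using C(2) unfolding connected_iff_interval .
  have "real k * \<delta>/2 \<le> b" using g2 ab(3) d by linarith
  then have "real k * \<delta>/2 \<in> C" using iv ab(1,2) g1 by blast
  moreover have "k \<le> nat \<lceil>2/\<delta>\<rceil>"
  proof -
    have "2*a/\<delta> \<le> 2/\<delta>" using a0 d by (intro divide_right_mono) auto
    then show ?thesis unfolding k_def by (intro nat_mono ceiling_mono)
  qed
  ultimately show "C \<inter> (\<lambda>k. real k * \<delta>/2) ` {..nat \<lceil>2/\<delta>\<rceil>} \<noteq> {}" by auto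
qed simp



lemma grid_circle:
  assumes d: "(\<delta>::real) > 0"
  shows "\<exists>G. finite G \<and> (\<forall>C. C \<subseteq> sphere (0::complex) 1 \<longrightarrow> connected C \<longrightarrow> (\<exists>y\<in>C. \<exists>z\<in>C. \<delta> < dist y z) \<longrightarrow> C \<inter> G \<noteq> {})"
proof -
  define Ks where "Ks = nat \<lceil>4*pi/\<delta>\<rceil> + 1"
  have Kpos: "real Ks > 0" unfolding Ks_def by simp
  have Kbig: "4*pi/\<delta> \<le> real Ks" unfolding Ks_def by linarith
  have step: "2*pi/real Ks \<le> \<delta>/2"
  proof -
    have "4*pi \<le> \<delta> * real Ks" using Kbig d by (simp add: field_simps)
    then show ?thesis using Kpos by (simp add: field_simps)
  qed
  define G where "G = (\<lambda>k. exp (\<i> * of_real (2*pi*real k/real Ks))) ` {..<Ks}"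
  have "C \<inter> G \<noteq> {}" if C: "C \<subseteq> sphere 0 1" "connected C" "\<exists>y\<in>C. \<exists>z\<in>C. \<delta> < dist y z" for C
  proof
    assume CG: "C \<inter> G = {}"
    have "1 \<in> G" unfolding G_def using Kpos by (auto intro!: image_eqI[of _ _ 0])
    then have C1: "C \<subseteq> sphere 0 1 - {1}" using CG C by auto
    define \<phi> where "\<phi> = (\<lambda>z::complex. Arg (- z / 1))"
    have pc: "continuous_on (sphere 0 1 - {1}) \<phi>" and
      pe: "\<And>z. z \<in> sphere 0 1 \<Longrightarrow> z = - 1 * exp (\<i> * of_real (\<phi> z))" and
      pr: "\<And>z. z \<in> sphere 0 1 - {1} \<Longrightarrow> -pi < \<phi> z \<and> \<phi> z < pi"
      using arc_param[of 1] unfolding \<phi>_def by auto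
    have cI: "connected (\<phi> ` C)"
      using connected_continuous_image[OF continuous_on_subset[OF pc C1] C(2)] .
    obtain y z where yz: "y \<in> C" "z \<in> C" "\<delta> < dist y z" using C(3) by blast
    have "dist y z = dist (exp (\<i> * of_real (\<phi> y))) (exp (\<i> * of_real (\<phi> z)))"
      using pe[of y] pe[of z] yz C(1) by (metis dist_minus mult_minus1 subsetD)
    then have far: "\<delta> < \<bar>\<phi> y - \<phi> z\<bar>" using exp_i_lip[of "\<phi> y" "\<phi> z"] yz by linarith
    define lo where "lo = min (\<phi> y) (\<phi> z)"
    define hi where "hi = max (\<phi> y) (\<phi> z)"
    have lohi: "lo \<in> \<phi> ` C" "hi \<in> \<phi> ` C" "lo + \<delta> < hi" "-pi < lo" "hi < pi"
    proof -
      have "y \<in> sphere 0 1 - {1}" "z \<in> sphere 0 1 - {1}" using yz C1 by auto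
      then have "-pi < \<phi> y" "\<phi> y < pi" "-pi < \<phi> z" "\<phi> z < pi" using pr by auto
      then show "lo \<in> \<phi> ` C" "hi \<in> \<phi> ` C" "lo + \<delta> < hi" "-pi < lo" "hi < pi"
        using yz far unfolding lo_def hi_def by (auto simp: min_def max_def)
    qed
    define k where "k = nat \<lceil>(lo + pi) * real Ks / (2*pi)\<rceil>"
    have rk: "real k = of_int \<lceil>(lo + pi) * real Ks / (2*pi)\<rceil>"
      unfolding k_def using lohi Kpos by (simp add: pi_gt_zero)
    have k1: "(lo + pi) * real Ks / (2*pi) \<le> real k" "real k < (lo + pi) * real Ks / (2*pi) + 1"
      using rk by linarith+
    define \<theta> where "\<theta> = 2*pi*real k/real Ks - pi"
    have t1: "lo \<le> \<theta>" using k1(1) Kpos pi_gt_zero unfolding \<theta>_def by (simp add: field_simps)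
    have "\<theta> < lo + 2*pi/real Ks"
    proof -
      have "2*pi*real k < 2*pi*((lo + pi) * real Ks / (2*pi) + 1)"
        using mult_strict_left_mono[OF k1(2), of "2*pi"] pi_gt_zero by simp
      also have "\<dots> = (lo+pi)*real Ks + 2*pi" using pi_gt_zero by (simp add: field_simps)
      finally have "2*pi*real k/real Ks < ((lo+pi)*real Ks + 2*pi)/real Ks"
        using Kpos by (simp add: divide_strict_right_mono)
      also have "\<dots> = lo + pi + 2*pi/real Ks" using Kpos by (simp add: field_simps)
      finally show ?thesis unfolding \<theta>_def by linarith
    qed
    then have t2: "\<theta> < hi" using step lohi d by linarith
    have "\<theta> \<in> \<phi> ` C"
      using cI lohi t1 t2 unfolding connected_iff_interval by (meson less_imp_le)
    then obtain c where c: "c \<in> C" "\<phi> c = \<theta>" by blast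
    have kK: "k < Ks"
    proof -
      have "2*pi*real k/real Ks < 2*pi" using t2 lohi unfolding \<theta>_def by linarith
      then have "real k < real Ks" using Kpos pi_gt_zero by (simp add: field_simps)
      then show ?thesis by simp
    qed
    have "c = - 1 * exp (\<i> * of_real \<theta>)" using pe[of c] c C(1) by auto
    also have "\<dots> = exp (\<i> * of_real (2*pi*real k/real Ks))"
    proof -
      have "exp (\<i> * of_real \<theta>) = exp (\<i> * of_real (2*pi*real k/real Ks)) * exp (- (\<i> * of_real pi))"
        unfolding \<theta>_def by (simp add: algebra_simps flip: exp_add)
      also have "exp (- (\<i> * of_real pi)) = -1" by (simp add: exp_minus)
      finally show ?thesis by simp
    qed
    finally have "c \<in> G" unfolding G_def using kK by auto
    then show False using CG c by auto
  qed
  moreover have "finite G" unfolding G_def by simp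
  ultimately show ?thesis by blast
qed




lemma interval_borel:
  fixes I :: "real set" assumes iv: "is_interval I" and bd: "bounded I"
  shows "finite (closure I - I)" "I \<in> sets borel"
proof -
  have sub: "closure I - I \<subseteq> {Inf I, Sup I}"
  proof
    fix x assume x: "x \<in> closure I - I"
    then have ne: "I \<noteq> {}" by auto
    have bb: "bdd_below I" "bdd_above I" using bd by (auto intro: bounded_imp_bdd_below bounded_imp_bdd_above)
    have "I \<subseteq> {Inf I..Sup I}" using bb by (auto intro: cInf_lower cSup_upper)
    then have "closure I \<subseteq> {Inf I..Sup I}" by (intro closure_minimal) auto
    then have x1: "Inf I \<le> x" "x \<le> Sup I" using x by auto
    show "x \<in> {Inf I, Sup I}"
    proof (rule ccontr)
      assume "x \<notin> {Inf I, Sup I}"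
      then have "Inf I < x" "x < Sup I" using x1 by auto
      then obtain a b where "a \<in> I" "a < x" "b \<in> I" "x < b"
        using cInf_less_iff[OF ne bb(1)] less_cSup_iff[OF ne bb(2)] by blast
      then have "x \<in> I" using iv unfolding is_interval_1 by (meson less_imp_le)
      then show False using x by auto
    qed
  qed
  then show fin: "finite (closure I - I)" by (rule finite_subset) simp
  have "I = closure I - (closure I - I)" using closure_subset by blast
  also have "\<dots> \<in> sets borel"
    by (intro sets.Diff borel_closed closed_closure finite_imp_closed fin)
  finally show "I \<in> sets borel" .
qed

lemma circle_conn_borel:
  fixes C :: "complex set"
  assumes CS: "C \<subseteq> sphere 0 1" and cC: "connected C" and p: "p \<in> sphere 0 1" "p \<notin> C"
  shows "C \<in> sets borel"
proof -
  have np: "norm p = 1" using p by simp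
  then have p0: "p \<noteq> 0" by auto
  define \<phi> where "\<phi> = (\<lambda>z. Arg (- z / p))"
  define \<psi> where "\<psi> = (\<lambda>\<theta>::real. - p * exp (\<i> * of_real \<theta>))"
  have pc: "continuous_on (sphere 0 1 - {p}) \<phi>" and
    pe: "\<And>z. z \<in> sphere 0 1 \<Longrightarrow> z = \<psi> (\<phi> z)" and
    pr: "\<And>z. z \<in> sphere 0 1 - {p} \<Longrightarrow> -pi < \<phi> z \<and> \<phi> z < pi"
    using arc_param[OF np] unfolding \<phi>_def \<psi>_def by auto
  have C1: "C \<subseteq> sphere 0 1 - {p}" using CS p by auto
  define I where "I = \<phi> ` C"
  have CI: "C = \<psi> ` I"
  proof
    show "C \<subseteq> \<psi> ` I"
    proof
      fix c assume c: "c \<in> C"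
      then have "c = \<psi> (\<phi> c)" using pe CS by blast
      then show "c \<in> \<psi> ` I" unfolding I_def using c by blast
    qed
  next
    show "\<psi> ` I \<subseteq> C"
    proof
      fix x assume "x \<in> \<psi> ` I"
      then obtain c where c: "c \<in> C" "x = \<psi> (\<phi> c)" unfolding I_def by blast
      then show "x \<in> C" using pe CS by (metis subsetD)
    qed
  qed
  have Ir: "I \<subseteq> {-pi<..<pi}"
  proof
    fix t assume "t \<in> I"
    then obtain z where z: "z \<in> C" "t = \<phi> z" unfolding I_def by blast
    then have "z \<in> sphere 0 1 - {p}" using C1 by blast
    then show "t \<in> {-pi<..<pi}" using pr[of z] z by simp
  qed
  have "I \<subseteq> {-pi..pi}" using Ir by auto
  then have bI: "bounded I" using bounded_subset[OF bounded_closed_interval] by blast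
  have iI: "is_interval I"
    unfolding I_def is_interval_connected_1
    using connected_continuous_image[OF continuous_on_subset[OF pc C1] cC] .
  have clI: "closure I \<subseteq> {-pi..pi}" using Ir by (intro closure_minimal) auto
  have inj: "\<theta> = \<theta>'" if "\<theta> \<in> {-pi<..<pi}" "\<theta>' \<in> {-pi..pi}" "\<psi> \<theta> = \<psi> \<theta>'" for \<theta> \<theta>'
  proof -
    have e: "exp (\<i> * of_real \<theta>) = exp (\<i> * of_real \<theta>')" using that(3) p0 unfolding \<psi>_def by simp
    have a1: "Arg (exp (\<i> * of_real \<theta>)) = \<theta>" using that(1) by (subst Arg_exp) auto
    show ?thesis
    proof (cases "\<theta>' = -pi")
      case True
      then have "exp (\<i> * of_real \<theta>') = -1" by (simp add: exp_minus)
      then have "\<theta> = Arg (-1)" using a1 e by simp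
      moreover have "Arg (-1::complex) = pi" by (simp add: Arg_eq_pi_iff)
      ultimately have "\<theta> = pi" by simp
      then show ?thesis using that(1) by simp
    next
      case False
      then have "Arg (exp (\<i> * of_real \<theta>')) = \<theta>'" using that(2) by (subst Arg_exp) auto
      then show ?thesis using a1 e by simp
    qed
  qed
  have eq: "\<psi> ` I = \<psi> ` closure I - \<psi> ` (closure I - I)"
  proof
    show "\<psi> ` I \<subseteq> \<psi> ` closure I - \<psi> ` (closure I - I)"
    proof
      fix x assume "x \<in> \<psi> ` I"
      then obtain \<theta> where t: "\<theta> \<in> I" "x = \<psi> \<theta>" by blast
      have "x \<notin> \<psi> ` (closure I - I)"
      proof
        assume "x \<in> \<psi> ` (closure I - I)"
        then obtain \<theta>' where t': "\<theta>' \<in> closure I - I" "x = \<psi> \<theta>'" by blast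
        have "\<theta> \<in> {-pi<..<pi}" using t Ir by blast
        moreover have "\<theta>' \<in> {-pi..pi}" using t' clI by blast
        moreover have "\<psi> \<theta> = \<psi> \<theta>'" using t t' by simp
        ultimately have "\<theta> = \<theta>'" by (rule inj)
        then show False using t t' by auto
      qed
      then show "x \<in> \<psi> ` closure I - \<psi> ` (closure I - I)" using t closure_subset by auto
    qed
  next
    show "\<psi> ` closure I - \<psi> ` (closure I - I) \<subseteq> \<psi> ` I" by auto
  qed
  have fin: "finite (closure I - I)" using interval_borel[OF iI bI] by simp
  have "compact (\<psi> ` closure I)"
    using bI unfolding \<psi>_def by (intro compact_continuous_image continuous_intros) (auto simp: compact_closure)
  then have "\<psi> ` closure I - \<psi> ` (closure I - I) \<in> sets borel"
    using fin by (intro sets.Diff borel_closed compact_imp_closed finite_imp_closed finite_imageI)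
  then show ?thesis using CI eq by simp
qed


theorem lemma4p11:
  shows "(\<forall>(f::real \<Rightarrow> real) J \<mu>.
            continuous_on {0..1} f \<and> f ` {0..1} \<subseteq> {0..1} \<and>
            wandering_interval {0..1} f J \<and>
            borel_prob_on {0..1} \<mu> \<and> expansive_measure {0..1} f \<mu>
            \<longrightarrow> J \<in> sets \<mu> \<and> emeasure \<mu> J = 0)
       \<and> (\<forall>(f::complex \<Rightarrow> complex) J \<mu>.
            continuous_on (sphere 0 1) f \<and> f ` sphere 0 1 \<subseteq> sphere 0 1 \<and>
            wandering_interval (sphere 0 1) f J \<and>
            borel_prob_on (sphere 0 1) \<mu> \<and> expansive_measure (sphere 0 1) f \<mu>
            \<longrightarrow> J \<in> sets \<mu> \<and> emeasure \<mu> J = 0)"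
proof (intro conjI allI impI)
  fix f :: "real \<Rightarrow> real" and J \<mu>
  assume a: "continuous_on {0..1} f \<and> f ` {0..1} \<subseteq> {0..1} \<and>
            wandering_interval {0..1} f J \<and>
            borel_prob_on {0..1} \<mu> \<and> expansive_measure {0..1} f \<mu>"
  have fc: "continuous_on {0..1} f" and fM: "f ` {0..1} \<subseteq> {0..1}"
    and W: "wandering_interval {0..1} f J" and P: "borel_prob_on {0..1} \<mu>"
    and ex: "expansive_measure {0..1} f \<mu>" using a by blast+
  have JM: "J \<subseteq> {0..1}" and cJ: "connected J"
    and wd: "\<forall>n m::nat. n \<noteq> m \<longrightarrow> (f^^n) ` J \<inter> (f^^m) ` J = {}"
    using W unfolding wandering_interval_def is_interval_in_def by blast+
  have sets: "sets \<mu> = sets (restrict_space borel {0..1})"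
    using P unfolding borel_prob_on_def by blast
  have "J \<in> sets borel"
    using interval_borel(2)[of J] cJ JM bounded_subset[OF bounded_closed_interval JM]
    by (simp add: is_interval_connected_1)
  then have "{0..1} \<inter> J \<in> sets (restrict_space borel {0..1})" unfolding sets_restrict_space by (rule imageI)
  then show "J \<in> sets \<mu>" using sets JM by (simp add: Int_absorb1)
  show "emeasure \<mu> J = 0"
    by (rule null_of_shrinking[OF compact_Icc fc fM JM sets ex])
       (rule shrink_from_grid[OF fc fM JM cJ wd grid_real], auto)
next
  fix f :: "complex \<Rightarrow> complex" and J \<mu>
  assume a: "continuous_on (sphere 0 1) f \<and> f ` sphere 0 1 \<subseteq> sphere 0 1 \<and>
            wandering_interval (sphere 0 1) f J \<and>
            borel_prob_on (sphere 0 1) \<mu> \<and> expansive_measure (sphere 0 1) f \<mu>"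
  have fc: "continuous_on (sphere 0 1) f" and fM: "f ` sphere 0 1 \<subseteq> sphere 0 1"
    and W: "wandering_interval (sphere 0 1) f J" and P: "borel_prob_on (sphere 0 1) \<mu>"
    and ex: "expansive_measure (sphere 0 1) f \<mu>" using a by blast+
  have JM: "J \<subseteq> sphere 0 1" and cJ: "connected J" and ne: "J \<noteq> {}"
    and wd: "\<forall>n m::nat. n \<noteq> m \<longrightarrow> (f^^n) ` J \<inter> (f^^m) ` J = {}"
    using W unfolding wandering_interval_def is_interval_in_def by blast+
  have sets: "sets \<mu> = sets (restrict_space borel (sphere 0 1))"
    using P unfolding borel_prob_on_def by blast
  obtain x where x: "x \<in> J" using ne by blast
  have "f ` J \<inter> J = {}" using wd[rule_format, of 1 0] by simp
  then have "f x \<notin> J" using x by blast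
  moreover have "f x \<in> sphere 0 1" using x JM fM by blast
  ultimately have "J \<in> sets borel" using circle_conn_borel[OF JM cJ] by blast
  then have "sphere 0 1 \<inter> J \<in> sets (restrict_space borel (sphere 0 1))" unfolding sets_restrict_space by (rule imageI)
  then show "J \<in> sets \<mu>" using sets JM by (simp add: Int_absorb1)
  show "emeasure \<mu> J = 0"
    by (rule null_of_shrinking[OF compact_sphere fc fM JM sets ex])
       (rule shrink_from_grid[OF fc fM JM cJ wd grid_circle], auto)
qed

end
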